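(* Let $n\in\mathbb{N}$, let $\mathbf{s}=(s_0,\ldots,s_n)\subset[0,\infty)$ be strictly positive on $(0,\infty)$ and let $s_{-1}\in[0,\infty)$. Then the sequence $\mathbf{s}'=(s_{-1},s_0,\ldots,s_n)$ (viewed as a sequence of length $n+2$ with $s_{-1}$ as its zeroth term) is strictly positive on $(0,\infty)$ if and only if $s_{-1}\in(t_\infty(\mathbf{s}),\infty)$.
   Context: For $a<b$ and $\mathbf{s}=(s_0,\ldots,s_n)$ let $\sigma(x^k)=s_k$ define a linear functional on real polynomials of degree $\le n$. $\mathbf{s}$ is positive on $[a,b]$ if $\sigma(P)\ge0$ for every such $P$ nonnegative on $[a,b]$, strictly positive if moreover $\sigma(P)>0$ for every such $P\not\equiv0$. Strictly positive on $(0,\infty)$ means strictly positive on some $[a,b]\subset(0,\infty)$. $\mathcal{M}_{a,b}(\mathbf{s})$ is the set of positive Borel measures on $[a,b]$ with $k$-th moments $s_k$ ($k=0,\ldots,n$); $t_{a,b}(\mathbf{s})=\inf\{\int_{[a,b]}\frac1t\,d\mu:\mu\in\mathcal{M}_{a,b}(\mathbf{s})\}$ with $\inf\varnothing=\infty$, and $t_\infty(\mathbf{s})=\inf_{0<a<b}t_{a,b}(\mathbf{s})$. *)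

theory Defs
  imports "HOL-Probability.Probability" "HOL-Computational_Algebra.Polynomial"
begin

text \<open>A sequence s = (s_0,...,s_n) is modelled as s :: nat => real together with n;
  only the values s 0, ..., s n matter.\<close>

definition riesz :: "nat \<Rightarrow> (nat \<Rightarrow> real) \<Rightarrow> real poly \<Rightarrow> real" where
  "riesz n s P = (\<Sum>k\<le>n. coeff P k * s k)"

definition positive_on :: "nat \<Rightarrow> (nat \<Rightarrow> real) \<Rightarrow> real \<Rightarrow> real \<Rightarrow> bool" where
  "positive_on n s a b \<longleftrightarrow>
     (\<forall>P. degree P \<le> n \<and> (\<forall>x\<in>{a..b}. 0 \<le> poly P x) \<longrightarrow> 0 \<le> riesz n s P)"

definition strictly_positive_on :: "nat \<Rightarrow> (nat \<Rightarrow> real) \<Rightarrow> real \<Rightarrow> real \<Rightarrow> bool" where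
  "strictly_positive_on n s a b \<longleftrightarrow> positive_on n s a b \<and>
     (\<forall>P. degree P \<le> n \<and> (\<forall>x\<in>{a..b}. 0 \<le> poly P x) \<and> P \<noteq> 0 \<longrightarrow> 0 < riesz n s P)"

definition strictly_positive_pos_reals :: "nat \<Rightarrow> (nat \<Rightarrow> real) \<Rightarrow> bool" where
  "strictly_positive_pos_reals n s \<longleftrightarrow>
     (\<exists>a b. 0 < a \<and> a < b \<and> strictly_positive_on n s a b)"

definition moment_measures :: "nat \<Rightarrow> (nat \<Rightarrow> real) \<Rightarrow> real \<Rightarrow> real \<Rightarrow> real measure set" where
  "moment_measures n s a b =
     {\<mu>. sets \<mu> = sets borel \<and> emeasure \<mu> (- {a..b}) = 0 \<and>
          (\<forall>k\<le>n. integrable \<mu> (\<lambda>x. x ^ k) \<and> (\<integral>x. x ^ k \<partial>\<mu>) = s k)}"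

definition t_ab :: "nat \<Rightarrow> (nat \<Rightarrow> real) \<Rightarrow> real \<Rightarrow> real \<Rightarrow> ennreal" where
  "t_ab n s a b = Inf ((\<lambda>\<mu>. \<integral>\<^sup>+x\<in>{a..b}. ennreal (1 / x) \<partial>\<mu>) ` moment_measures n s a b)"

definition t_inf :: "nat \<Rightarrow> (nat \<Rightarrow> real) \<Rightarrow> ennreal" where
  "t_inf n s = (INF ab\<in>{(a, b). 0 < a \<and> a < b}. t_ab n s (fst ab) (snd ab))"

definition prepend_seq :: "real \<Rightarrow> (nat \<Rightarrow> real) \<Rightarrow> nat \<Rightarrow> real" where
  "prepend_seq c s k = (if k = 0 then c else s (k - 1))"

end

theory Submission
  imports Defs "Jordan_Normal_Form.Determinant"
begin


lemma bolzano_multi: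
  fixes f :: "nat \<Rightarrow> nat \<Rightarrow> real"
  assumes "\<forall>k<M. bounded (range (f k))"
  shows "\<exists>r l. strict_mono r \<and> (\<forall>k<M. (\<lambda>j. f k (r j)) \<longlonglongrightarrow> l k)"
  using assms
proof (induction M)
  case 0
  then show ?case by (intro exI[of _ id]) (auto simp: strict_mono_def)
next
  case (Suc M)
  then obtain r l where r: "strict_mono r" "\<forall>k<M. (\<lambda>j. f k (r j)) \<longlonglongrightarrow> l k" by auto
  have "range (\<lambda>j. f M (r j)) \<subseteq> range (f M)" by auto
  then have "bounded (range (\<lambda>j. f M (r j)))"
    using Suc.prems bounded_subset by blast
  then obtain l2 r2 where r2: "strict_mono r2" "((\<lambda>j. f M (r j)) \<circ> r2) \<longlonglongrightarrow> l2"
    using bounded_imp_convergent_subsequence by blast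
  show ?case
  proof (intro exI conjI allI impI)
    show "strict_mono (r \<circ> r2)" using r(1) r2(1) by (rule strict_mono_o)
    fix k assume "k < Suc M"
    show "(\<lambda>j. f k ((r \<circ> r2) j)) \<longlonglongrightarrow> (l(M := l2)) k"
    proof (cases "k = M")
      case True
      then show ?thesis using r2(2) by (simp add: o_def)
    next
      case False
      then have "k < M" using \<open>k < Suc M\<close> by simp
      then have "((\<lambda>j. f k (r j)) \<circ> r2) \<longlonglongrightarrow> l k"
        using r(2) r2(1) by (intro LIMSEQ_subseq_LIMSEQ) auto
      then show ?thesis using False by (simp add: o_def)
    qed
  qed
qed

definition poly_of :: "nat \<Rightarrow> (nat \<Rightarrow> real) \<Rightarrow> real poly" where
  "poly_of m p = (\<Sum>k\<le>m. Polynomial.monom (p k) k)"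

lemma coeff_poly_of: "coeff (poly_of m p) i = (if i \<le> m then p i else 0)"
  unfolding poly_of_def by (simp add: coeff_sum coeff_monom)

lemma degree_poly_of: "degree (poly_of m p) \<le> m"
  unfolding poly_of_def
  by (rule degree_sum_le) (auto intro: order.trans[OF degree_monom_le])

lemma poly_as_sum:
  fixes P :: "real poly"
  assumes "degree P \<le> m"
  shows "poly P x = (\<Sum>k\<le>m. coeff P k * x ^ k)"
proof -
  have "poly P x = (\<Sum>k\<le>degree P. coeff P k * x ^ k)" by (rule poly_altdef)
  also have "\<dots> = (\<Sum>k\<le>m. coeff P k * x ^ k)"
    using assms by (intro sum.mono_neutral_left) (auto simp: coeff_eq_0)
  finally show ?thesis .
qed

lemma poly_poly_of: "poly (poly_of m p) x = (\<Sum>k\<le>m. p k * x ^ k)"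
  by (subst poly_as_sum[OF degree_poly_of]) (simp add: coeff_poly_of)

lemma poly_eq_poly_of:
  assumes "degree P \<le> m" shows "P = poly_of m (coeff P)"
  using assms by (intro poly_eqI) (auto simp: coeff_poly_of coeff_eq_0)

lemma riesz_smult: "riesz n s (Polynomial.smult c P) = c * riesz n s P"
  unfolding riesz_def by (simp add: sum_distrib_left mult_ac)

lemma riesz_zero[simp]: "riesz n s 0 = 0"
  unfolding riesz_def by simp

lemma riesz_poly_of: "riesz n s (poly_of n p) = (\<Sum>k\<le>n. p k * s k)"
  unfolding riesz_def by (simp add: coeff_poly_of)

lemma riesz_prepend:
  "riesz (Suc n) (prepend_seq c s) P = coeff P 0 * c + (\<Sum>k\<le>n. coeff P (Suc k) * s k)"
  unfolding riesz_def prepend_seq_def sum.atMost_Suc_shift by simp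

lemma sum_abs_coeff_pos:
  fixes P :: "real poly"
  assumes "degree P \<le> m" "P \<noteq> 0"
  shows "(\<Sum>k\<le>m. \<bar>coeff P k\<bar>) > 0"
proof -
  have "lead_coeff P \<noteq> 0" using assms by simp
  then have "\<bar>coeff P (degree P)\<bar> > 0" by simp
  moreover have "\<bar>coeff P (degree P)\<bar> \<le> (\<Sum>k\<le>m. \<bar>coeff P k\<bar>)"
    using assms(1) by (intro member_le_sum) auto
  ultimately show ?thesis by linarith
qed

lemma normalize_poly:
  fixes P :: "real poly"
  assumes "degree P \<le> m" "P \<noteq> 0"
  obtains c where "c > 0" "(\<Sum>k\<le>m. \<bar>coeff (Polynomial.smult c P) k\<bar>) = 1"
proof -
  define S where "S = (\<Sum>k\<le>m. \<bar>coeff P k\<bar>)"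
  have S: "S > 0" using sum_abs_coeff_pos[OF assms] by (simp add: S_def)
  have "(\<Sum>k\<le>m. \<bar>coeff (Polynomial.smult (1/S) P) k\<bar>) = (1/S) * S"
    using S by (simp add: S_def sum_distrib_left abs_mult)
  also have "\<dots> = 1" using S by simp
  finally show ?thesis using S that[of "1/S"] by simp
qed

lemma poly_compact:
  fixes P :: "nat \<Rightarrow> real poly"
  assumes "\<forall>j. degree (P j) \<le> m" "\<forall>j. (\<Sum>k\<le>m. \<bar>coeff (P j) k\<bar>) = 1"
  shows "\<exists>r Q. strict_mono r \<and> degree Q \<le> m \<and> (\<Sum>k\<le>m. \<bar>coeff Q k\<bar>) = 1 \<and>
           (\<forall>k. (\<lambda>j. coeff (P (r j)) k) \<longlonglongrightarrow> coeff Q k)"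
proof -
  have bnd: "\<bar>coeff (P j) k\<bar> \<le> 1" if "k \<le> m" for j k
  proof -
    have "\<bar>coeff (P j) k\<bar> \<le> (\<Sum>k\<le>m. \<bar>coeff (P j) k\<bar>)"
      using that by (intro member_le_sum) auto
    then show ?thesis using assms(2) by simp
  qed
  have "\<forall>k<Suc m. bounded (range (\<lambda>j. coeff (P j) k))"
    using bnd by (auto simp: bounded_iff intro!: exI[of _ 1])
  then obtain r l where r: "strict_mono r" "\<forall>k<Suc m. (\<lambda>j. coeff (P (r j)) k) \<longlonglongrightarrow> l k"
    using bolzano_multi[of "Suc m" "\<lambda>k j. coeff (P j) k"] by auto
  define Q where "Q = poly_of m l"
  have conv: "(\<lambda>j. coeff (P (r j)) k) \<longlonglongrightarrow> coeff Q k" for k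
  proof (cases "k \<le> m")
    case True
    then show ?thesis using r(2) by (simp add: Q_def coeff_poly_of)
  next
    case False
    then have "coeff (P (r j)) k = 0" for j using assms(1) by (intro coeff_eq_0) (meson le_trans not_le)
    then show ?thesis using False by (simp add: Q_def coeff_poly_of)
  qed
  have "(\<lambda>j. (\<Sum>k\<le>m. \<bar>coeff (P (r j)) k\<bar>)) \<longlonglongrightarrow> (\<Sum>k\<le>m. \<bar>coeff Q k\<bar>)"
    by (intro tendsto_sum tendsto_rabs conv)
  then have "(\<Sum>k\<le>m. \<bar>coeff Q k\<bar>) = 1" using assms(2) by (simp add: LIMSEQ_const_iff)
  then show ?thesis using r(1) conv degree_poly_of[of m l] unfolding Q_def by blast
qed

lemma poly_conv:
  fixes P :: "nat \<Rightarrow> real poly"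
  assumes "\<forall>j. degree (P j) \<le> m" "degree Q \<le> m" "\<forall>k. (\<lambda>j. coeff (P j) k) \<longlonglongrightarrow> coeff Q k"
  shows "(\<lambda>j. poly (P j) x) \<longlonglongrightarrow> poly Q x"
proof -
  have "(\<lambda>j. \<Sum>k\<le>m. coeff (P j) k * x ^ k) \<longlonglongrightarrow> (\<Sum>k\<le>m. coeff Q k * x ^ k)"
    using assms(3) by (intro tendsto_sum tendsto_mult tendsto_const) auto
  moreover have "poly (P j) x = (\<Sum>k\<le>m. coeff (P j) k * x ^ k)" for j
    using assms(1) by (simp add: poly_as_sum)
  ultimately show ?thesis using assms(2) by (simp add: poly_as_sum)
qed

lemma riesz_conv:
  fixes P :: "nat \<Rightarrow> real poly"
  assumes "\<forall>k. (\<lambda>j. coeff (P j) k) \<longlonglongrightarrow> coeff Q k"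
  shows "(\<lambda>j. riesz n s (P j)) \<longlonglongrightarrow> riesz n s Q"
  using assms unfolding riesz_def by (intro tendsto_sum tendsto_mult tendsto_const) auto



lemma lin_dep:
  fixes x :: "nat \<Rightarrow> real"
  shows "\<exists>l. (\<exists>i<Suc (Suc m). l i \<noteq> 0) \<and> (\<forall>k\<le>m. (\<Sum>i<Suc (Suc m). l i * x i ^ k) = 0)"
proof -
  define N where "N = Suc (Suc m)"
  define A :: "real mat" where "A = mat N N (\<lambda>(k,i). x i ^ min k m)"
  have A: "A \<in> carrier_mat N N" unfolding A_def by simp
  have rows: "Matrix.row A m = Matrix.row A (Suc m)"
    by (rule eq_vecI) (auto simp: A_def N_def)
  have "Determinant.det A = 0"
    by (rule det_identical_rows[OF A, of m "Suc m"]) (auto simp: N_def rows)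
  then obtain v where v: "v \<in> carrier_vec N" "v \<noteq> 0\<^sub>v N" "A *\<^sub>v v = 0\<^sub>v N"
    using det_0_iff_vec_prod_zero_field[OF A] by blast
  have "\<exists>i<N. v $ i \<noteq> 0"
  proof (rule ccontr)
    assume "\<not> ?thesis"
    then have "v = 0\<^sub>v N" using v(1) by (intro eq_vecI) auto
    then show False using v(2) by simp
  qed
  moreover have "(\<Sum>i<N. v $ i * x i ^ k) = 0" if "k \<le> m" for k
  proof -
    have "(A *\<^sub>v v) $ k = 0" using v(3) that by (simp add: N_def)
    moreover have "(A *\<^sub>v v) $ k = (\<Sum>i<N. v $ i * x i ^ k)"
      using that v(1) unfolding A_def
      by (auto simp: N_def scalar_prod_def mult.commute intro!: sum.cong)
    ultimately show ?thesis by simp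
  qed
  ultimately show ?thesis unfolding N_def by (intro exI[of _ "\<lambda>i. v $ i"]) auto
qed

definition atomic :: "nat \<Rightarrow> (nat \<Rightarrow> real) \<Rightarrow> real \<Rightarrow> real \<Rightarrow> nat \<Rightarrow> bool" where
  "atomic m v a b N \<longleftrightarrow> (\<exists>w x. (\<forall>i<N. 0 \<le> w i \<and> a \<le> x i \<and> x i \<le> b) \<and>
      (\<forall>k\<le>m. v k = (\<Sum>i<N. w i * x i ^ k)))"

lemma carath_step:
  assumes "atomic m v a b N" "Suc m < N"
  shows "atomic m v a b (N - 1)"
proof -
  obtain w x where wx: "\<forall>i<N. 0 \<le> w i \<and> a \<le> x i \<and> x i \<le> b"
    "\<forall>k\<le>m. v k = (\<Sum>i<N. w i * x i ^ k)"
    using assms(1) unfolding atomic_def by blast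
  obtain l0 where l0: "\<exists>i<Suc (Suc m). l0 i \<noteq> 0" "\<forall>k\<le>m. (\<Sum>i<Suc (Suc m). l0 i * x i ^ k) = 0"
    using lin_dep[of m x] by blast
  define l1 where "l1 i = (if i < Suc (Suc m) then l0 i else 0)" for i
  have l1sum: "(\<Sum>i<N. l1 i * x i ^ k) = 0" if "k \<le> m" for k
  proof -
    have "(\<Sum>i<N. l1 i * x i ^ k) = (\<Sum>i<Suc (Suc m). l1 i * x i ^ k)"
      using assms(2) by (intro sum.mono_neutral_right) (auto simp: l1_def)
    also have "\<dots> = (\<Sum>i<Suc (Suc m). l0 i * x i ^ k)" by (intro sum.cong) (auto simp: l1_def)
    finally show ?thesis using l0(2) that by simp
  qed
  have l1nz: "\<exists>i<N. l1 i \<noteq> 0" using l0(1) assms(2) by (auto simp: l1_def)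
  obtain l where l: "\<exists>i<N. l i > 0" "\<forall>k\<le>m. (\<Sum>i<N. l i * x i ^ k) = 0"
  proof (cases "\<exists>i<N. l1 i > 0")
    case True
    then show ?thesis using that l1sum by blast
  next
    case False
    then have "\<exists>i<N. - l1 i > 0" using l1nz by force
    moreover have "\<forall>k\<le>m. (\<Sum>i<N. (- l1 i) * x i ^ k) = 0"
      using l1sum by (simp add: sum_negf)
    ultimately obtain i where "i<N" "- l1 i > 0" by blast
    show ?thesis
      by (rule that[of "\<lambda>i. - l1 i"]) (use \<open>i<N\<close> \<open>- l1 i > 0\<close> \<open>\<forall>k\<le>m. (\<Sum>i<N. (- l1 i) * x i ^ k) = 0\<close> in auto)
  qed
  define I where "I = {i. i < N \<and> l i > 0}"
  have I: "finite I" "I \<noteq> {}" using l(1) by (auto simp: I_def)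
  define f where "f i = w i / l i" for i
  have "Min (f ` I) \<in> f ` I" using I by (intro Min_in) auto
  then obtain i0 where i0: "i0 \<in> I" "f i0 = Min (f ` I)" by auto
  have i0min: "f i0 \<le> f i" if "i \<in> I" for i using i0(2) I that by simp
  define t where "t = f i0"
  have t0: "t \<ge> 0" using i0(1) wx(1) by (auto simp: t_def f_def I_def)
  define w' where "w' i = w i - t * l i" for i
  have w'nn: "0 \<le> w' i" if "i < N" for i
  proof (cases "l i > 0")
    case True
    then have "t \<le> w i / l i" using i0min[of i] that by (auto simp: t_def f_def I_def)
    then have "t * l i \<le> w i" using True by (simp add: pos_le_divide_eq)
    then show ?thesis by (simp add: w'_def)
  next
    case False
    then have "t * l i \<le> 0" using t0 by (simp add: mult_nonneg_nonpos)
    moreover have "0 \<le> w i" using wx(1) that by blast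
    ultimately show ?thesis by (simp add: w'_def)
  qed
  have w'i0: "w' i0 = 0" using i0(1) by (auto simp: w'_def t_def f_def I_def)
  have i0N: "i0 < N" using i0(1) by (simp add: I_def)
  have w'sum: "v k = (\<Sum>i<N. w' i * x i ^ k)" if "k \<le> m" for k
  proof -
    have "(\<Sum>i<N. w' i * x i ^ k) = (\<Sum>i<N. w i * x i ^ k) - t * (\<Sum>i<N. l i * x i ^ k)"
      by (simp add: w'_def algebra_simps sum_subtractf sum_distrib_left)
    then show ?thesis using wx(2) l(2) that by simp
  qed
  define g where "g i = (if i = i0 then N - 1 else i)" for i
  define h where "h j = (if j = N - 1 then i0 else j)" for j
  have sumeq: "(\<Sum>i<N - 1. w' (g i) * x (g i) ^ k) = (\<Sum>i<N. w' i * x i ^ k)" for k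
  proof -
    have "(\<Sum>i<N - 1. w' (g i) * x (g i) ^ k) = (\<Sum>j\<in>{..<N} - {i0}. w' j * x j ^ k)"
      by (rule sum.reindex_bij_witness[where i = h and j = g])
         (use i0N in \<open>auto simp: g_def h_def split: if_splits\<close>)
    also have "\<dots> = (\<Sum>j<N. w' j * x j ^ k)"
      using i0N w'i0 by (intro sum.mono_neutral_left) auto
    finally show ?thesis .
  qed
  have A: "\<forall>i<N - 1. 0 \<le> (w' \<circ> g) i \<and> a \<le> (x \<circ> g) i \<and> (x \<circ> g) i \<le> b"
  proof (intro allI impI)
    fix i assume "i < N - 1"
    then have "g i < N" using i0N by (auto simp: g_def)
    then show "0 \<le> (w' \<circ> g) i \<and> a \<le> (x \<circ> g) i \<and> (x \<circ> g) i \<le> b"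
      using w'nn wx(1) by auto
  qed
  have B: "\<forall>k\<le>m. v k = (\<Sum>i<N - 1. (w' \<circ> g) i * (x \<circ> g) i ^ k)"
    using sumeq w'sum by simp
  show ?thesis unfolding atomic_def using A B by blast
qed

lemma atomic_pad:
  assumes "atomic m v a b N" "N \<le> M" "a \<le> b"
  shows "atomic m v a b M"
proof -
  obtain w x where wx: "\<forall>i<N. 0 \<le> w i \<and> a \<le> x i \<and> x i \<le> b"
    "\<forall>k\<le>m. v k = (\<Sum>i<N. w i * x i ^ k)"
    using assms(1) unfolding atomic_def by blast
  define w' where "w' i = (if i < N then w i else 0)" for i
  define x' where "x' i = (if i < N then x i else a)" for i
  have "(\<Sum>i<M. w' i * x' i ^ k) = (\<Sum>i<N. w i * x i ^ k)" for k
  proof -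
    have "(\<Sum>i<M. w' i * x' i ^ k) = (\<Sum>i<N. w' i * x' i ^ k)"
      using assms(2) by (intro sum.mono_neutral_right) (auto simp: w'_def)
    then show ?thesis by (simp add: w'_def x'_def)
  qed
  moreover have "\<forall>i<M. 0 \<le> w' i \<and> a \<le> x' i \<and> x' i \<le> b"
    using wx(1) assms(3) by (simp add: w'_def x'_def)
  ultimately show ?thesis unfolding atomic_def using wx(2)
    by (intro exI[of _ w'] exI[of _ x']) simp
qed

lemma carath:
  assumes "atomic m v a b N" "a \<le> b"
  shows "atomic m v a b (Suc m)"
  using assms(1)
proof (induction N)
  case 0
  then show ?case using atomic_pad assms(2) by blast
next
  case (Suc N)
  show ?case
  proof (cases "Suc N \<le> Suc m")
    case True
    then show ?thesis using atomic_pad Suc.prems assms(2) by blast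
  next
    case False
    then have "atomic m v a b N" using carath_step[OF Suc.prems] by simp
    then show ?thesis using Suc.IH by blast
  qed
qed



lemma atomic_closed:
  assumes "a \<le> b" "\<forall>j. atomic m (c j) a b N" "\<forall>k\<le>m. (\<lambda>j. c j k) \<longlonglongrightarrow> v k"
  shows "atomic m v a b N"
proof -
  have "\<forall>j. \<exists>wx. (\<forall>i<N. 0 \<le> fst wx i \<and> a \<le> snd wx i \<and> snd wx i \<le> b) \<and>
      (\<forall>k\<le>m. c j k = (\<Sum>i<N. fst wx i * snd wx i ^ k))"
  proof
    fix j
    obtain w x where "(\<forall>i<N. 0 \<le> w i \<and> a \<le> x i \<and> x i \<le> b) \<and> (\<forall>k\<le>m. c j k = (\<Sum>i<N. w i * x i ^ k))"
      using assms(2) unfolding atomic_def by blast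
    then show "\<exists>wx. (\<forall>i<N. 0 \<le> fst wx i \<and> a \<le> snd wx i \<and> snd wx i \<le> b) \<and>
      (\<forall>k\<le>m. c j k = (\<Sum>i<N. fst wx i * snd wx i ^ k))" by (intro exI[of _ "(w, x)"]) simp
  qed
  from choice[OF this] obtain F where F: "\<forall>j. (\<forall>i<N. 0 \<le> fst (F j) i \<and> a \<le> snd (F j) i \<and> snd (F j) i \<le> b) \<and>
      (\<forall>k\<le>m. c j k = (\<Sum>i<N. fst (F j) i * snd (F j) i ^ k))" by blast
  define W where "W j = fst (F j)" for j
  define X where "X j = snd (F j)" for j
  have WX: "\<And>j i. i < N \<Longrightarrow> 0 \<le> W j i \<and> a \<le> X j i \<and> X j i \<le> b"
    using F by (simp add: W_def X_def)
  have mom: "\<And>j k. k \<le> m \<Longrightarrow> c j k = (\<Sum>i<N. W j i * X j i ^ k)"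
    using F by (simp add: W_def X_def)
  have "convergent (\<lambda>j. c j 0)" using assms(3) by (auto simp: convergent_def)
  then have "Bseq (\<lambda>j. c j 0)" by (rule convergent_imp_Bseq)
  then obtain K where K: "\<And>j. \<bar>c j 0\<bar> \<le> K" unfolding Bseq_def by auto
  have Wb: "W j i \<le> K" if "i < N" for i j
  proof -
    have "W j i \<le> (\<Sum>i<N. W j i)" using WX that by (intro member_le_sum) auto
    also have "\<dots> = c j 0" using mom[of 0 j] by simp
    also have "\<dots> \<le> K" using K[of j] by simp
    finally show ?thesis .
  qed
  define f where "f idx j = (if idx < N then W j idx else X j (idx - N))" for idx j
  have "\<forall>idx<2*N. bounded (range (f idx))"
  proof (intro allI impI)
    fix idx assume idx: "idx < 2 * N"
    have "\<forall>j. norm (f idx j) \<le> max K (max \<bar>a\<bar> \<bar>b\<bar>)"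
    proof
      fix j
      show "norm (f idx j) \<le> max K (max \<bar>a\<bar> \<bar>b\<bar>)"
      proof (cases "idx < N")
        case True
        then show ?thesis using WX[of idx j] Wb[of idx j] by (auto simp: f_def)
      next
        case False
        then have "idx - N < N" using idx by simp
        then have "a \<le> X j (idx - N)" "X j (idx - N) \<le> b" using WX[of "idx - N" j] by auto
        then have "\<bar>X j (idx - N)\<bar> \<le> max \<bar>a\<bar> \<bar>b\<bar>" by linarith
        moreover have "max \<bar>a\<bar> \<bar>b\<bar> \<le> max K (max \<bar>a\<bar> \<bar>b\<bar>)" by (rule max.cobounded2)
        ultimately have "\<bar>X j (idx - N)\<bar> \<le> max K (max \<bar>a\<bar> \<bar>b\<bar>)" by linarith
        then show ?thesis using False by (simp add: f_def)
      qed
    qed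
    then show "bounded (range (f idx))" unfolding bounded_iff by blast
  qed
  then obtain r L where r: "strict_mono r" "\<forall>idx<2*N. (\<lambda>j. f idx (r j)) \<longlonglongrightarrow> L idx"
    using bolzano_multi by blast
  define w where "w i = L i" for i
  define x where "x i = L (N + i)" for i
  have hW: "(\<lambda>j. W (r j) i) \<longlonglongrightarrow> w i" if "i < N" for i
    using r(2)[rule_format, of i] that by (simp add: f_def w_def)
  have hX: "(\<lambda>j. X (r j) i) \<longlonglongrightarrow> x i" if "i < N" for i
    using r(2)[rule_format, of "N + i"] that by (simp add: f_def x_def)
  have props: "0 \<le> w i \<and> a \<le> x i \<and> x i \<le> b" if "i < N" for i
  proof (intro conjI)
    show "0 \<le> w i" using hW[OF that] WX[OF that] by (intro LIMSEQ_le_const) auto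
    show "a \<le> x i" using hX[OF that] WX[OF that] by (intro LIMSEQ_le_const) auto
    show "x i \<le> b" using hX[OF that] WX[OF that] by (intro LIMSEQ_le_const2) auto
  qed
  have moms: "v k = (\<Sum>i<N. w i * x i ^ k)" if "k \<le> m" for k
  proof -
    have "((\<lambda>j. c j k) \<circ> r) \<longlonglongrightarrow> v k"
      using assms(3) that r(1) by (intro LIMSEQ_subseq_LIMSEQ) auto
    then have 1: "(\<lambda>j. c (r j) k) \<longlonglongrightarrow> v k" by (simp add: o_def)
    have "(\<lambda>j. \<Sum>i<N. W (r j) i * X (r j) i ^ k) \<longlonglongrightarrow> (\<Sum>i<N. w i * x i ^ k)"
      using hW hX by (intro tendsto_sum tendsto_mult tendsto_power) auto
    then have 2: "(\<lambda>j. c (r j) k) \<longlonglongrightarrow> (\<Sum>i<N. w i * x i ^ k)"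
      using mom[OF that] by simp
    show ?thesis using LIMSEQ_unique[OF 1 2] .
  qed
  show ?thesis unfolding atomic_def using props moms by blast
qed

lemma atomic_scale:
  assumes "atomic m c a b N" "0 \<le> l"
  shows "atomic m (\<lambda>k. l * c k) a b N"
proof -
  obtain w x where wx: "\<forall>i<N. 0 \<le> w i \<and> a \<le> x i \<and> x i \<le> b"
    "\<forall>k\<le>m. c k = (\<Sum>i<N. w i * x i ^ k)"
    using assms(1) unfolding atomic_def by blast
  show ?thesis unfolding atomic_def using wx assms(2)
    by (intro exI[of _ "\<lambda>i. l * w i"] exI[of _ x]) (simp add: sum_distrib_left mult.assoc)
qed

lemma atomic_mix:
  assumes "atomic m c a b N" "0 \<le> t" "t \<le> 1" "a \<le> y" "y \<le> b"
  shows "atomic m (\<lambda>k. (1 - t) * c k + t * y ^ k) a b (Suc N)"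
proof -
  obtain w x where wx: "\<forall>i<N. 0 \<le> w i \<and> a \<le> x i \<and> x i \<le> b"
    "\<forall>k\<le>m. c k = (\<Sum>i<N. w i * x i ^ k)"
    using assms(1) unfolding atomic_def by blast
  define w' where "w' i = (if i < N then (1 - t) * w i else t)" for i
  define x' where "x' i = (if i < N then x i else y)" for i
  have A: "\<forall>i<Suc N. 0 \<le> w' i \<and> a \<le> x' i \<and> x' i \<le> b"
    using wx(1) assms by (auto simp: w'_def x'_def less_Suc_eq)
  have B: "\<forall>k\<le>m. (1 - t) * c k + t * y ^ k = (\<Sum>i<Suc N. w' i * x' i ^ k)"
    using wx(2) by (simp add: w'_def x'_def sum_distrib_left mult.assoc)
  show ?thesis unfolding atomic_def using A B by blast
qed

lemma scalar_var:
  fixes \<alpha> \<beta> :: real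
  assumes "\<beta> \<ge> 0" "\<forall>t. 0 < t \<and> t \<le> 1 \<longrightarrow> 0 \<le> 2 * t * \<alpha> + t^2 * \<beta>"
  shows "0 \<le> \<alpha>"
proof (rule ccontr)
  assume "\<not> 0 \<le> \<alpha>"
  then have a: "\<alpha> < 0" by simp
  define t where "t = min 1 (- \<alpha> / (\<beta> + 1))"
  have "0 < - \<alpha> / (\<beta> + 1)" using a assms(1) by (intro divide_pos_pos) auto
  then have t0: "0 < t" "t \<le> 1" by (auto simp: t_def)
  have "t \<le> - \<alpha> / (\<beta> + 1)" by (simp add: t_def)
  moreover have "0 < \<beta> + 1" using assms(1) by simp
  ultimately have "t * (\<beta> + 1) \<le> - \<alpha>" using pos_le_divide_eq[of "\<beta> + 1" t "- \<alpha>"] by simp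
  then have tb: "t * \<beta> < - \<alpha>" using t0 by (simp add: algebra_simps)
  have "2 * t * \<alpha> + t^2 * \<beta> = t * (2 * \<alpha> + t * \<beta>)" by (simp add: power2_eq_square algebra_simps)
  also have "\<dots> < 0" using tb t0 a by (intro mult_pos_neg) auto
  finally show False using assms(2) t0 by force
qed

lemma sq_bound:
  fixes y z :: real
  assumes "y^2 \<le> z" shows "\<bar>y\<bar> \<le> z + 1"
proof (cases "\<bar>y\<bar> \<le> 1")
  case True
  then show ?thesis using assms by (smt (verit) zero_le_power2)
next
  case False
  then have "1 * \<bar>y\<bar> \<le> \<bar>y\<bar> * \<bar>y\<bar>" by (intro mult_right_mono) auto
  then have "\<bar>y\<bar> \<le> \<bar>y\<bar> * \<bar>y\<bar>" by simp
  also have "\<dots> = y^2" by (simp add: power2_eq_square abs_mult_self_eq)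
  finally show ?thesis using assms by simp
qed

lemma positive_imp_atomic:
  assumes ab: "a \<le> b" and pos: "positive_on m v a b"
  shows "atomic m v a b (Suc m)"
proof (rule ccontr)
  assume nv: "\<not> atomic m v a b (Suc m)"
  define K where "K = {c. \<exists>N. atomic m c a b N}"
  define D where "D c = (\<Sum>k\<le>m. (v k - c k)^2)" for c :: "nat \<Rightarrow> real"
  define d where "d = Inf (D ` K)"
  have K0: "(\<lambda>k. 0) \<in> K" unfolding K_def atomic_def by (intro CollectI exI[of _ 0]) auto
  have Dnn: "0 \<le> D c" for c unfolding D_def by (intro sum_nonneg) auto
  have bdd: "bdd_below (D ` K)" using Dnn by (intro bdd_belowI[of _ 0]) auto
  have dle: "d \<le> D c" if "c \<in> K" for c unfolding d_def using bdd that by (intro cInf_lower) auto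
  have "\<forall>j. \<exists>c. c \<in> K \<and> D c < d + 1 / Suc j"
  proof
    fix j
    have "Inf (D ` K) < d + 1 / Suc j" by (simp add: d_def)
    then show "\<exists>c. c \<in> K \<and> D c < d + 1 / Suc j" using K0 by (subst (asm) cInf_less_iff[OF _ bdd]) auto
  qed
  from choice[OF this] obtain C where C: "\<forall>j. C j \<in> K \<and> D (C j) < d + 1 / Suc j" by blast
  have CK: "atomic m (C j) a b (Suc m)" for j using C carath ab unfolding K_def by blast
  have Cb: "\<bar>C j k\<bar> \<le> \<bar>v k\<bar> + (d + 2)" if "k \<le> m" for j k
  proof -
    have "(v k - C j k)^2 \<le> D (C j)" unfolding D_def using that by (intro member_le_sum) auto
    also have "\<dots> \<le> d + 1"
    proof -
      have "1 / real (Suc j) \<le> 1" by simp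
      then show ?thesis using C[rule_format, of j] by linarith
    qed
    finally have "\<bar>v k - C j k\<bar> \<le> d + 2" using sq_bound by fastforce
    then show ?thesis by linarith
  qed
  have "\<forall>k<Suc m. bounded (range (\<lambda>j. C j k))"
  proof (intro allI impI)
    fix k assume "k < Suc m"
    then have "\<forall>x\<in>range (\<lambda>j. C j k). norm x \<le> \<bar>v k\<bar> + (d + 2)" using Cb by auto
    then show "bounded (range (\<lambda>j. C j k))" unfolding bounded_iff by blast
  qed
  then obtain r l where r: "strict_mono r" "\<forall>k<Suc m. (\<lambda>j. C (r j) k) \<longlonglongrightarrow> l k"
    using bolzano_multi[of "Suc m" "\<lambda>k j. C j k"] by auto
  have csA: "atomic m l a b (Suc m)"
    using atomic_closed[OF ab, of m "\<lambda>j. C (r j)" "Suc m" l] CK r(2) by auto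
  then have csK: "l \<in> K" unfolding K_def by blast
  have "D l \<le> d"
  proof -
    have 1: "(\<lambda>j. D (C (r j))) \<longlonglongrightarrow> D l"
      unfolding D_def using r(2) by (intro tendsto_sum tendsto_power tendsto_diff tendsto_const) auto
    have 2: "(\<lambda>j. d + inverse (real (Suc j))) \<longlonglongrightarrow> d + 0"
      by (intro tendsto_add tendsto_const LIMSEQ_inverse_real_of_nat)
    have 3: "D (C (r j)) \<le> d + inverse (real (Suc j))" for j
    proof -
      have "j \<le> r j" using r(1) by (rule seq_suble)
      then have "1 / real (Suc (r j)) \<le> 1 / real (Suc j)" by (intro divide_left_mono) auto
      then show ?thesis using C[rule_format, of "r j"] by (simp add: inverse_eq_divide)
    qed
    show ?thesis using LIMSEQ_le[OF 1 2] 3 by auto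
  qed
  then have Dmin: "D l \<le> D c" if "c \<in> K" for c using dle[OF that] by linarith
  define p where "p k = l k - v k" for k
  have var: "0 \<le> (\<Sum>k\<le>m. p k * u k)"
    if H: "\<And>t. 0 < t \<Longrightarrow> t \<le> 1 \<Longrightarrow> (\<lambda>k. l k + t * u k) \<in> K" for u
  proof (rule scalar_var[of "\<Sum>k\<le>m. (u k)^2"])
    show "0 \<le> (\<Sum>k\<le>m. (u k)^2)" by (intro sum_nonneg) auto
    show "\<forall>t. 0 < t \<and> t \<le> 1 \<longrightarrow> 0 \<le> 2 * t * (\<Sum>k\<le>m. p k * u k) + t^2 * (\<Sum>k\<le>m. (u k)^2)"
    proof (intro allI impI)
      fix t :: real assume t: "0 < t \<and> t \<le> 1"
      have "D l \<le> D (\<lambda>k. l k + t * u k)" using H t Dmin by blast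
      moreover have "D (\<lambda>k. l k + t * u k) - D l = 2 * t * (\<Sum>k\<le>m. p k * u k) + t^2 * (\<Sum>k\<le>m. (u k)^2)"
        unfolding D_def p_def
        by (simp add: sum_subtractf[symmetric] sum_distrib_left sum.distrib[symmetric] power2_eq_square algebra_simps)
      ultimately show "0 \<le> 2 * t * (\<Sum>k\<le>m. p k * u k) + t^2 * (\<Sum>k\<le>m. (u k)^2)" by linarith
    qed
  qed
  have v1: "0 \<le> (\<Sum>k\<le>m. p k * l k)"
  proof (rule var)
    fix t :: real assume "0 < t" "t \<le> 1"
    have "atomic m (\<lambda>k. (1 + t) * l k) a b (Suc m)" using atomic_scale[OF csA] \<open>0 < t\<close> by simp
    moreover have "(\<lambda>k. (1 + t) * l k) = (\<lambda>k. l k + t * l k)" by (auto simp: algebra_simps)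
    ultimately show "(\<lambda>k. l k + t * l k) \<in> K" unfolding K_def by auto
  qed
  have v2: "0 \<le> (\<Sum>k\<le>m. p k * (- l k))"
  proof (rule var)
    fix t :: real assume "0 < t" "t \<le> 1"
    have "atomic m (\<lambda>k. (1 - t) * l k) a b (Suc m)" using atomic_scale[OF csA] \<open>t \<le> 1\<close> by simp
    moreover have "(\<lambda>k. (1 - t) * l k) = (\<lambda>k. l k + t * - l k)" by (auto simp: algebra_simps)
    ultimately show "(\<lambda>k. l k + t * - l k) \<in> K" unfolding K_def by auto
  qed
  have pl: "(\<Sum>k\<le>m. p k * l k) = 0" using v1 v2 by (simp add: sum_negf)
  have py: "0 \<le> (\<Sum>k\<le>m. p k * y ^ k)" if y: "a \<le> y" "y \<le> b" for y
  proof -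
    have "0 \<le> (\<Sum>k\<le>m. p k * (y ^ k - l k))"
    proof (rule var)
      fix t :: real assume "0 < t" "t \<le> 1"
      have "atomic m (\<lambda>k. (1 - t) * l k + t * y ^ k) a b (Suc (Suc m))"
        using atomic_mix[OF csA _ \<open>t \<le> 1\<close> y] \<open>0 < t\<close> by simp
      moreover have "(\<lambda>k. (1 - t) * l k + t * y ^ k) = (\<lambda>k. l k + t * (y ^ k - l k))" by (auto simp: algebra_simps)
      ultimately show "(\<lambda>k. l k + t * (y ^ k - l k)) \<in> K" unfolding K_def by auto
    qed
    also have "\<dots> = (\<Sum>k\<le>m. p k * y ^ k) - (\<Sum>k\<le>m. p k * l k)"
      by (simp add: algebra_simps sum_subtractf)
    finally show ?thesis using pl by simp
  qed
  define P where "P = poly_of m p"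
  have "0 \<le> riesz m v P"
    using pos unfolding positive_on_def
  proof (elim allE impE)
    show "degree P \<le> m \<and> (\<forall>x\<in>{a..b}. 0 \<le> poly P x)"
      using py by (auto simp: P_def degree_poly_of poly_poly_of)
  qed
  moreover have "riesz m v P = (\<Sum>k\<le>m. p k * l k) - (\<Sum>k\<le>m. (p k)^2)"
  proof -
    have "riesz m v P = (\<Sum>k\<le>m. p k * v k)" by (simp add: P_def riesz_poly_of)
    also have "\<dots> = (\<Sum>k\<le>m. p k * l k - (p k)^2)"
      by (intro sum.cong) (auto simp: p_def power2_eq_square algebra_simps)
    also have "\<dots> = (\<Sum>k\<le>m. p k * l k) - (\<Sum>k\<le>m. (p k)^2)" by (simp add: sum_subtractf)
    finally show ?thesis .
  qed
  ultimately have "(\<Sum>k\<le>m. (p k)^2) \<le> 0" using pl by simp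
  then have "(\<Sum>k\<le>m. (p k)^2) = 0" by (meson order_antisym sum_nonneg zero_le_power2)
  then have "\<forall>k\<in>{..m}. (p k)^2 = 0" by (subst (asm) sum_nonneg_eq_0_iff) auto
  then have "\<forall>k\<le>m. v k = l k" by (auto simp: p_def)
  then have "atomic m v a b (Suc m)" using csA unfolding atomic_def by auto
  then show False using nv by simp
qed



definition atm :: "nat \<Rightarrow> (nat \<Rightarrow> real) \<Rightarrow> (nat \<Rightarrow> real) \<Rightarrow> real measure" where
  "atm N u x = distr (density (count_space {..<N}) (\<lambda>i. ennreal (u i))) borel x"

lemma atm_sets: "sets (atm N u x) = sets borel"
  unfolding atm_def by simp

lemma atm_nn:
  assumes "g \<in> borel_measurable borel"
  shows "(\<integral>\<^sup>+y. g y \<partial>atm N u x) = (\<Sum>i<N. ennreal (u i) * g (x i))"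
  unfolding atm_def
  using assms by (simp add: nn_integral_distr nn_integral_density nn_integral_count_space_finite)

lemma atm_integrable:
  fixes f :: "real \<Rightarrow> real"
  assumes "\<forall>i<N. 0 \<le> u i" "f \<in> borel_measurable borel"
  shows "integrable (atm N u x) f"
  unfolding atm_def using assms
  by (subst integrable_distr_eq) (auto simp: integrable_density AE_count_space integrable_count_space)

lemma atm_integral:
  fixes f :: "real \<Rightarrow> real"
  assumes "\<forall>i<N. 0 \<le> u i" "f \<in> borel_measurable borel"
  shows "(\<integral>y. f y \<partial>atm N u x) = (\<Sum>i<N. u i * f (x i))"
  unfolding atm_def using assms
  by (simp add: integral_distr, subst integral_density) (auto simp: AE_count_space lebesgue_integral_count_space_finite)

lemma poly_split:
  fixes Q :: "real poly"
  assumes "degree Q \<le> Suc n"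
  shows "poly Q x = coeff Q 0 + x * poly (poly_of n (\<lambda>k. coeff Q (Suc k))) x"
proof -
  have "poly Q x = (\<Sum>k\<le>Suc n. coeff Q k * x ^ k)" using assms by (rule poly_as_sum)
  also have "\<dots> = coeff Q 0 + (\<Sum>k\<le>n. coeff Q (Suc k) * x ^ Suc k)"
    by (subst sum.atMost_Suc_shift) simp
  also have "\<dots> = coeff Q 0 + x * poly (poly_of n (\<lambda>k. coeff Q (Suc k))) x"
    by (simp add: poly_poly_of sum_distrib_left mult_ac)
  finally show ?thesis .
qed

lemma meas_pos:
  fixes \<mu> :: "real measure" and Q :: "real poly"
  assumes mu: "sets \<mu> = sets borel" "emeasure \<mu> (- {a..b}) = 0"
    "\<forall>k\<le>n. integrable \<mu> (\<lambda>x. x ^ k) \<and> (\<integral>x. x ^ k \<partial>\<mu>) = s k"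
    and a: "0 < a"
    and I: "(\<integral>\<^sup>+x\<in>{a..b}. ennreal (1 / x) \<partial>\<mu>) = ennreal c" "0 \<le> c"
    and Q: "degree Q \<le> Suc n" "\<forall>x\<in>{a..b}. 0 \<le> poly Q x"
  shows "0 \<le> coeff Q 0 * c + (\<Sum>k\<le>n. coeff Q (Suc k) * s k)"
proof -
  have meas: "f \<in> borel_measurable \<mu>" if "f \<in> borel_measurable borel" for f :: "real \<Rightarrow> real"
    using that mu(1) by (simp add: measurable_def)
  define g where "g x = indicator {a..b} x / x" for x :: real
  have gm: "g \<in> borel_measurable borel" unfolding g_def by measurable
  have int1: "integrable \<mu> (\<lambda>x. (1 / a) * x ^ 0)"
    using mu(3) by (intro integrable_mult_right) auto
  have gb: "norm (g x) \<le> norm ((1 / a) * x ^ 0)" for x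
  proof (cases "x \<in> {a..b}")
    case True
    then have "0 < x" using a by auto
    then show ?thesis using True a by (auto simp: g_def frac_le)
  next
    case False
    then show ?thesis using a by (simp add: g_def)
  qed
  have gmu: "g \<in> borel_measurable \<mu>" by (rule meas[OF gm])
  have gi: "integrable \<mu> g"
    by (rule Bochner_Integration.integrable_bound[OF int1 gmu]) (rule AE_I2[OF gb])
  have gnn: "0 \<le> g x" for x using a by (auto simp: g_def indicator_def)
  have "(\<integral>\<^sup>+x. ennreal (g x) \<partial>\<mu>) = (\<integral>\<^sup>+x\<in>{a..b}. ennreal (1 / x) \<partial>\<mu>)"
    by (intro nn_integral_cong) (auto simp: g_def indicator_def)
  also have "\<dots> = ennreal c" by (rule I(1))
  finally have "ennreal (integral\<^sup>L \<mu> g) = ennreal c"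
    using nn_integral_eq_integral[OF gi] gnn by simp
  then have gint: "integral\<^sup>L \<mu> g = c"
    using I(2) gnn by (simp add: integral_nonneg_AE)
  have AE: "AE x in \<mu>. x \<in> {a..b}"
    by (rule AE_I'[of "- {a..b}"]) (use mu(1,2) in \<open>auto simp: null_sets_def\<close>)
  define h where "h x = coeff Q 0 * g x + (\<Sum>k\<le>n. coeff Q (Suc k) * x ^ k)" for x
  have hi: "integral\<^sup>L \<mu> h = coeff Q 0 * c + (\<Sum>k\<le>n. coeff Q (Suc k) * s k)"
  proof -
    have ik: "integrable \<mu> (\<lambda>x. coeff Q (Suc k) * x ^ k)" if "k \<le> n" for k
      using mu(3) that by (intro integrable_mult_right) auto
    have "integral\<^sup>L \<mu> h = coeff Q 0 * integral\<^sup>L \<mu> g + (\<Sum>k\<le>n. integral\<^sup>L \<mu> (\<lambda>x. coeff Q (Suc k) * x ^ k))"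
    proof -
      have i1: "integrable \<mu> (\<lambda>x. coeff Q 0 * g x)" using gi by (rule integrable_mult_right)
      have i2: "integrable \<mu> (\<lambda>x. \<Sum>k\<le>n. coeff Q (Suc k) * x ^ k)"
        by (rule Bochner_Integration.integrable_sum) (use ik in auto)
      have "integral\<^sup>L \<mu> h = integral\<^sup>L \<mu> (\<lambda>x. coeff Q 0 * g x) + integral\<^sup>L \<mu> (\<lambda>x. \<Sum>k\<le>n. coeff Q (Suc k) * x ^ k)"
        unfolding h_def by (rule Bochner_Integration.integral_add[OF i1 i2])
      also have "\<dots> = coeff Q 0 * integral\<^sup>L \<mu> g + (\<Sum>k\<le>n. integral\<^sup>L \<mu> (\<lambda>x. coeff Q (Suc k) * x ^ k))"
        by (subst Bochner_Integration.integral_sum) (use ik in auto)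
      finally show ?thesis .
    qed
    also have "\<dots> = coeff Q 0 * c + (\<Sum>k\<le>n. coeff Q (Suc k) * s k)"
      using mu(3) gint by (auto intro!: sum.cong)
    finally show ?thesis .
  qed
  have "AE x in \<mu>. 0 \<le> h x"
    using AE
  proof (rule AE_mp, intro AE_I2 impI)
    fix x assume x: "x \<in> {a..b}"
    then have x0: "0 < x" using a by auto
    have "x * h x = poly Q x"
      using x x0 by (simp add: h_def g_def poly_split[OF Q(1), of x] poly_poly_of sum_distrib_left algebra_simps)
    then have "0 \<le> x * h x" using Q(2) x by simp
    then show "0 \<le> h x" using x0 by (simp add: zero_le_mult_iff)
  qed
  then have "0 \<le> integral\<^sup>L \<mu> h" by (rule integral_nonneg_AE)
  then show ?thesis using hi by simp
qed

lemma riesz_prepend_diff: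
  "riesz (Suc n) (prepend_seq (c - e) s) P = riesz (Suc n) (prepend_seq c s) P - coeff P 0 * e"
  by (simp add: riesz_prepend algebra_simps)

lemma fwd:
  assumes sp: "strictly_positive_pos_reals (Suc n) (prepend_seq sm1 s)"
  shows "t_inf n s < ennreal sm1"
proof -
  obtain a b where ab: "0 < a" "a < b" and spo: "strictly_positive_on (Suc n) (prepend_seq sm1 s) a b"
    using sp unfolding strictly_positive_pos_reals_def by blast
  let ?s' = "prepend_seq sm1 s"
  have "\<exists>j. positive_on (Suc n) (prepend_seq (sm1 - 1 / Suc j) s) a b"
  proof (rule ccontr)
    assume "\<not> ?thesis"
    then have "\<forall>j. \<exists>P. degree P \<le> Suc n \<and> (\<forall>x\<in>{a..b}. 0 \<le> poly P x) \<and>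
        riesz (Suc n) (prepend_seq (sm1 - 1 / Suc j) s) P < 0"
      unfolding positive_on_def by (auto simp: not_le)
    then have "\<forall>j. \<exists>P. degree P \<le> Suc n \<and> (\<forall>x\<in>{a..b}. 0 \<le> poly P x) \<and>
        riesz (Suc n) (prepend_seq (sm1 - 1 / Suc j) s) P < 0 \<and> (\<Sum>k\<le>Suc n. \<bar>coeff P k\<bar>) = 1"
    proof (intro allI)
      fix j
      assume "\<forall>j. \<exists>P. degree P \<le> Suc n \<and> (\<forall>x\<in>{a..b}. 0 \<le> poly P x) \<and>
        riesz (Suc n) (prepend_seq (sm1 - 1 / Suc j) s) P < 0"
      then obtain P where P: "degree P \<le> Suc n" "\<forall>x\<in>{a..b}. 0 \<le> poly P x"
        "riesz (Suc n) (prepend_seq (sm1 - 1 / Suc j) s) P < 0" by blast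
      then have "P \<noteq> 0" by auto
      then obtain c where c: "c > 0" "(\<Sum>k\<le>Suc n. \<bar>coeff (Polynomial.smult c P) k\<bar>) = 1"
        using normalize_poly[OF P(1)] by blast
      show "\<exists>P. degree P \<le> Suc n \<and> (\<forall>x\<in>{a..b}. 0 \<le> poly P x) \<and>
        riesz (Suc n) (prepend_seq (sm1 - 1 / Suc j) s) P < 0 \<and> (\<Sum>k\<le>Suc n. \<bar>coeff P k\<bar>) = 1"
        using P c by (intro exI[of _ "Polynomial.smult c P"])
          (auto simp: riesz_smult mult_pos_neg intro: order.trans[OF degree_smult_le])
    qed
    from choice[OF this] obtain PP where PP: "\<forall>j. degree (PP j) \<le> Suc n \<and> (\<forall>x\<in>{a..b}. 0 \<le> poly (PP j) x) \<and>
        riesz (Suc n) (prepend_seq (sm1 - 1 / Suc j) s) (PP j) < 0 \<and> (\<Sum>k\<le>Suc n. \<bar>coeff (PP j) k\<bar>) = 1"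
      by blast
    obtain r Q where rQ: "strict_mono r" "degree Q \<le> Suc n" "(\<Sum>k\<le>Suc n. \<bar>coeff Q k\<bar>) = 1"
      "\<forall>k. (\<lambda>j. coeff (PP (r j)) k) \<longlonglongrightarrow> coeff Q k"
      using poly_compact[of PP "Suc n"] PP by blast
    have Qnn: "0 \<le> poly Q x" if "x \<in> {a..b}" for x
    proof -
      have "(\<lambda>j. poly (PP (r j)) x) \<longlonglongrightarrow> poly Q x"
        using rQ PP by (intro poly_conv[of _ "Suc n"]) auto
      then show ?thesis using PP that by (intro LIMSEQ_le_const) auto
    qed
    have Qnz: "Q \<noteq> 0" using rQ(3) by auto
    have "riesz (Suc n) ?s' Q \<le> 0"
    proof -
      have 1: "(\<lambda>j. riesz (Suc n) ?s' (PP (r j)) - coeff (PP (r j)) 0 * inverse (real (Suc (r j))))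
          \<longlonglongrightarrow> riesz (Suc n) ?s' Q - coeff Q 0 * 0"
      proof (intro tendsto_diff tendsto_mult)
        show "(\<lambda>j. riesz (Suc n) ?s' (PP (r j))) \<longlonglongrightarrow> riesz (Suc n) ?s' Q"
          using rQ(4) by (rule riesz_conv)
        show "(\<lambda>j. coeff (PP (r j)) 0) \<longlonglongrightarrow> coeff Q 0" using rQ(4) by blast
        have "((\<lambda>j. inverse (real (Suc j))) \<circ> r) \<longlonglongrightarrow> 0"
          using LIMSEQ_inverse_real_of_nat rQ(1) by (rule LIMSEQ_subseq_LIMSEQ)
        then show "(\<lambda>j. inverse (real (Suc (r j)))) \<longlonglongrightarrow> 0" by (simp add: o_def)
      qed
      have "riesz (Suc n) ?s' (PP (r j)) - coeff (PP (r j)) 0 * inverse (real (Suc (r j))) < 0" for j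
      proof -
        have "riesz (Suc n) (prepend_seq (sm1 - 1 / Suc (r j)) s) (PP (r j)) < 0" using PP by blast
        then show ?thesis using riesz_prepend_diff[of n sm1 "1 / Suc (r j)" s "PP (r j)"]
          by (simp add: inverse_eq_divide)
      qed
      then have "riesz (Suc n) ?s' Q - coeff Q 0 * 0 \<le> 0"
        by (intro LIMSEQ_le_const2[OF 1]) (auto intro: less_imp_le)
      then show ?thesis by simp
    qed
    moreover have "0 < riesz (Suc n) ?s' Q"
      using spo rQ(2) Qnn Qnz unfolding strictly_positive_on_def by blast
    ultimately show False by simp
  qed
  then obtain j where pos: "positive_on (Suc n) (prepend_seq (sm1 - 1 / Suc j) s) a b" by blast
  define e where "e = 1 / real (Suc j)"
  have e0: "0 < e" by (simp add: e_def)
  have "atomic (Suc n) (prepend_seq (sm1 - e) s) a b (Suc (Suc n))"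
    using positive_imp_atomic[of a b "Suc n"] pos ab by (simp add: e_def)
  then obtain w x where wx: "\<forall>i<Suc (Suc n). 0 \<le> w i \<and> a \<le> x i \<and> x i \<le> b"
    "\<forall>k\<le>Suc n. prepend_seq (sm1 - e) s k = (\<Sum>i<Suc (Suc n). w i * x i ^ k)"
    unfolding atomic_def by blast
  define N where "N = Suc (Suc n)"
  have w0: "sm1 - e = (\<Sum>i<N. w i)" using wx(2)[rule_format, of 0] by (simp add: prepend_seq_def N_def)
  have wk: "s k = (\<Sum>i<N. w i * x i ^ Suc k)" if "k \<le> n" for k
    using wx(2)[rule_format, of "Suc k"] that by (simp add: prepend_seq_def N_def)
  define u where "u i = w i * x i" for i
  have xpos: "0 < x i" if "i < N" for i using wx(1) ab that by (auto simp: N_def)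
  have u0: "\<forall>i<N. 0 \<le> u i"
  proof (intro allI impI)
    fix i assume i: "i < N"
    then have "0 \<le> w i" using wx(1) by (simp add: N_def)
    then show "0 \<le> u i" using xpos[OF i] by (simp add: u_def)
  qed
  define \<mu> where "\<mu> = atm N u x"
  have "\<mu> \<in> moment_measures n s a b"
    unfolding moment_measures_def
  proof (intro CollectI conjI allI impI)
    show "sets \<mu> = sets borel" by (simp add: \<mu>_def atm_sets)
    have "emeasure \<mu> (- {a..b}) = (\<integral>\<^sup>+y. indicator (- {a..b}) y \<partial>\<mu>)"
      by (subst nn_integral_indicator) (auto simp: \<mu>_def atm_sets)
    also have "\<dots> = (\<Sum>i<N. ennreal (u i) * indicator (- {a..b}) (x i))"
      unfolding \<mu>_def by (rule atm_nn) measurable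
    also have "\<dots> = 0" using wx(1) by (auto simp: N_def indicator_def)
    finally show "emeasure \<mu> (- {a..b}) = 0" .
    fix k assume k: "k \<le> n"
    show "integrable \<mu> (\<lambda>x. x ^ k)" unfolding \<mu>_def using u0 by (intro atm_integrable) auto
    have "(\<integral>y. y ^ k \<partial>\<mu>) = (\<Sum>i<N. u i * x i ^ k)" unfolding \<mu>_def using u0 by (intro atm_integral) auto
    also have "\<dots> = s k" using wk[OF k] by (simp add: u_def mult_ac)
    finally show "(\<integral>y. y ^ k \<partial>\<mu>) = s k" .
  qed
  moreover have "(\<integral>\<^sup>+y\<in>{a..b}. ennreal (1 / y) \<partial>\<mu>) = ennreal (sm1 - e)"
  proof -
    have "(\<integral>\<^sup>+y\<in>{a..b}. ennreal (1 / y) \<partial>\<mu>) = (\<Sum>i<N. ennreal (u i) * (ennreal (1 / x i) * indicator {a..b} (x i)))"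
      unfolding \<mu>_def by (rule atm_nn) measurable
    also have "\<dots> = (\<Sum>i<N. ennreal (w i))"
    proof (intro sum.cong refl)
      fix i assume "i \<in> {..<N}"
      then have i: "i < N" by simp
      then have "x i \<in> {a..b}" using wx(1) by (auto simp: N_def)
      then have "ennreal (u i) * (ennreal (1 / x i) * indicator {a..b} (x i)) = ennreal (u i * (1 / x i))"
      proof -
        have "0 \<le> u i" using u0 i by blast
        then have "ennreal (u i) * ennreal (1 / x i) = ennreal (u i * (1 / x i))"
          by (rule ennreal_mult[symmetric]) (use xpos[OF i] \<open>0 \<le> u i\<close> in auto)
        then show ?thesis using \<open>x i \<in> {a..b}\<close> by simp
      qed
      also have "\<dots> = ennreal (w i)" using xpos[OF i] by (simp add: u_def)
      finally show "ennreal (u i) * (ennreal (1 / x i) * indicator {a..b} (x i)) = ennreal (w i)" .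
    qed
    also have "\<dots> = ennreal (sm1 - e)" using w0 wx(1) by (subst sum_ennreal) (auto simp: N_def)
    finally show ?thesis .
  qed
  ultimately have "t_ab n s a b \<le> ennreal (sm1 - e)"
    unfolding t_ab_def by (metis (no_types, lifting) INF_lower)
  moreover have "t_inf n s \<le> t_ab n s a b"
    unfolding t_inf_def using ab by (intro INF_lower2[of "(a, b)"]) auto
  moreover have "0 \<le> (\<Sum>i<N. w i)" using wx(1) by (intro sum_nonneg) (simp add: N_def)
  then have "0 \<le> sm1 - e" using w0 by simp
  then have "ennreal (sm1 - e) < ennreal sm1" using e0 by (intro ennreal_lessI) auto
  ultimately show ?thesis by (meson order.trans order_le_less_trans)
qed

lemma bwd:
  assumes sps: "strictly_positive_pos_reals n s" and lt: "t_inf n s < ennreal sm1"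
  shows "strictly_positive_pos_reals (Suc n) (prepend_seq sm1 s)"
proof -
  let ?s' = "prepend_seq sm1 s"
  obtain ab where ab: "ab \<in> {(a, b). 0 < a \<and> a < b}" "t_ab n s (fst ab) (snd ab) < ennreal sm1"
    using lt unfolding t_inf_def by (auto simp: INF_less_iff)
  define a where "a = fst ab"
  define b where "b = snd ab"
  have ab0: "0 < a" "a < b" using ab(1) by (auto simp: a_def b_def)
  obtain \<mu> where mu: "\<mu> \<in> moment_measures n s a b"
    and muI: "(\<integral>\<^sup>+x\<in>{a..b}. ennreal (1 / x) \<partial>\<mu>) < ennreal sm1"
    using ab(2) unfolding t_ab_def a_def b_def by (auto simp: Inf_less_iff)
  define c where "c = enn2real (\<integral>\<^sup>+x\<in>{a..b}. ennreal (1 / x) \<partial>\<mu>)"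
  have c0: "0 \<le> c" by (simp add: c_def)
  have Ic: "(\<integral>\<^sup>+x\<in>{a..b}. ennreal (1 / x) \<partial>\<mu>) = ennreal c"
  proof -
    have "(\<integral>\<^sup>+x\<in>{a..b}. ennreal (1 / x) \<partial>\<mu>) < \<top>"
      using muI by (meson ennreal_less_top order.strict_trans)
    then show ?thesis unfolding c_def by simp
  qed
  have csm: "c < sm1" using muI Ic c0 by (simp add: ennreal_less_iff)
  have Lpos: "0 \<le> coeff Q 0 * c + (\<Sum>k\<le>n. coeff Q (Suc k) * s k)"
    if "degree Q \<le> Suc n" "\<forall>x\<in>{a..b}. 0 \<le> poly Q x" for Q
    using mu meas_pos[of \<mu> a b n s c Q] ab0 Ic c0 that unfolding moment_measures_def by blast
  obtain a0 b0 where ab00: "0 < a0" "a0 < b0" and sp0: "strictly_positive_on n s a0 b0"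
    using sps unfolding strictly_positive_pos_reals_def by blast
  define A where "A = min a a0"
  define B where "B = max b b0"
  have A0: "0 < A" using ab0 ab00 by (simp add: A_def)
  have AB: "A < B" using ab0 ab00 by (simp add: A_def B_def)
  have "\<exists>j. \<forall>P. degree P \<le> Suc n \<and> (\<forall>x\<in>{A / (real j + 2)..B}. 0 \<le> poly P x) \<and> P \<noteq> 0 \<longrightarrow> 0 < riesz (Suc n) ?s' P"
  proof (rule ccontr)
    assume "\<not> ?thesis"
    then have "\<forall>j. \<exists>P. degree P \<le> Suc n \<and> (\<forall>x\<in>{A / (real j + 2)..B}. 0 \<le> poly P x) \<and> P \<noteq> 0 \<and> riesz (Suc n) ?s' P \<le> 0"
      by (auto simp: not_less)
    then have "\<forall>j. \<exists>P. degree P \<le> Suc n \<and> (\<forall>x\<in>{A / (real j + 2)..B}. 0 \<le> poly P x) \<and> riesz (Suc n) ?s' P \<le> 0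
         \<and> (\<Sum>k\<le>Suc n. \<bar>coeff P k\<bar>) = 1"
    proof (intro allI)
      fix j
      assume "\<forall>j. \<exists>P. degree P \<le> Suc n \<and> (\<forall>x\<in>{A / (real j + 2)..B}. 0 \<le> poly P x) \<and> P \<noteq> 0 \<and> riesz (Suc n) ?s' P \<le> 0"
      then obtain P where P: "degree P \<le> Suc n" "\<forall>x\<in>{A / (real j + 2)..B}. 0 \<le> poly P x" "P \<noteq> 0"
        "riesz (Suc n) ?s' P \<le> 0" by blast
      then obtain c where c: "c > 0" "(\<Sum>k\<le>Suc n. \<bar>coeff (Polynomial.smult c P) k\<bar>) = 1"
        using normalize_poly[OF P(1)] by blast
      show "\<exists>P. degree P \<le> Suc n \<and> (\<forall>x\<in>{A / (real j + 2)..B}. 0 \<le> poly P x) \<and> riesz (Suc n) ?s' P \<le> 0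
         \<and> (\<Sum>k\<le>Suc n. \<bar>coeff P k\<bar>) = 1"
        using P c by (intro exI[of _ "Polynomial.smult c P"])
          (auto simp: riesz_smult mult_nonneg_nonpos intro: order.trans[OF degree_smult_le])
    qed
    from choice[OF this] obtain PP where PP: "\<forall>j. degree (PP j) \<le> Suc n \<and> (\<forall>x\<in>{A / (real j + 2)..B}. 0 \<le> poly (PP j) x) \<and> riesz (Suc n) ?s' (PP j) \<le> 0
         \<and> (\<Sum>k\<le>Suc n. \<bar>coeff (PP j) k\<bar>) = 1"
      by blast
    obtain r Q where rQ: "strict_mono r" "degree Q \<le> Suc n" "(\<Sum>k\<le>Suc n. \<bar>coeff Q k\<bar>) = 1"
      "\<forall>k. (\<lambda>j. coeff (PP (r j)) k) \<longlonglongrightarrow> coeff Q k"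
      using poly_compact[of PP "Suc n"] PP by blast
    have Qnn: "0 \<le> poly Q x" if x: "0 < x" "x \<le> B" for x
    proof -
      have conv: "(\<lambda>j. poly (PP (r j)) x) \<longlonglongrightarrow> poly Q x"
        using rQ PP by (intro poly_conv[of _ "Suc n"]) auto
      obtain N0 :: nat where N0: "A / x < real N0" using reals_Archimedean2 by blast
      have "0 \<le> poly (PP (r j)) x" if j: "N0 \<le> j" for j
      proof -
        have "j \<le> r j" using rQ(1) by (rule seq_suble)
        then have "A / x < real (r j) + 2" using N0 j by linarith
        then have "A < x * (real (r j) + 2)" using x by (simp add: pos_divide_less_eq mult.commute)
        then have "A / (real (r j) + 2) \<le> x" by (simp add: pos_divide_le_eq mult.commute)
        then show ?thesis using PP x by auto
      qed
      then show ?thesis using conv by (intro LIMSEQ_le_const) auto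
    qed
    have Q0: "0 \<le> coeff Q 0"
    proof -
      have "(\<lambda>j. B * inverse (real (Suc j))) \<longlonglongrightarrow> B * 0"
        by (intro tendsto_mult tendsto_const LIMSEQ_inverse_real_of_nat)
      then have "(\<lambda>j. poly Q (B * inverse (real (Suc j)))) \<longlonglongrightarrow> poly Q 0"
        by (intro tendsto_poly) simp
      moreover have "0 \<le> poly Q (B * inverse (real (Suc j)))" for j
      proof (rule Qnn)
        show "0 < B * inverse (real (Suc j))" using A0 AB by simp
        have "inverse (real (Suc j)) \<le> 1" by (simp add: inverse_le_1_iff)
        then show "B * inverse (real (Suc j)) \<le> B" using A0 AB
          by (metis less_trans mult.right_neutral mult_left_mono order_less_imp_le)
      qed
      ultimately have "0 \<le> poly Q 0" by (intro LIMSEQ_le_const) auto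
      then show ?thesis by (simp add: poly_0_coeff_0)
    qed
    have Rle: "riesz (Suc n) ?s' Q \<le> 0"
    proof -
      have "(\<lambda>j. riesz (Suc n) ?s' (PP (r j))) \<longlonglongrightarrow> riesz (Suc n) ?s' Q"
        using rQ(4) by (rule riesz_conv)
      then show ?thesis using PP by (intro LIMSEQ_le_const2) auto
    qed
    have Qab: "\<forall>x\<in>{a..b}. 0 \<le> poly Q x" using Qnn ab0 by (auto simp: B_def)
    have L: "0 \<le> coeff Q 0 * c + (\<Sum>k\<le>n. coeff Q (Suc k) * s k)" using Lpos[OF rQ(2) Qab] .
    have Rq: "riesz (Suc n) ?s' Q = coeff Q 0 * (sm1 - c) + (coeff Q 0 * c + (\<Sum>k\<le>n. coeff Q (Suc k) * s k))"
      by (simp add: riesz_prepend algebra_simps)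
    have "coeff Q 0 * (sm1 - c) \<le> 0" using Rle L Rq by linarith
    then have q0: "coeff Q 0 = 0" using Q0 csm by (smt (verit) mult_pos_pos)
    define R where "R = poly_of n (\<lambda>k. coeff Q (Suc k))"
    have Rs: "riesz n s R \<le> 0" using Rle Rq q0 by (simp add: R_def riesz_poly_of)
    have Rnn: "\<forall>x\<in>{a0..b0}. 0 \<le> poly R x"
    proof
      fix x assume x: "x \<in> {a0..b0}"
      then have x0: "0 < x" "x \<le> B" using ab00 by (auto simp: B_def)
      have "poly Q x = x * poly R x" using poly_split[OF rQ(2), of x] q0 by (simp add: R_def)
      then have "0 \<le> x * poly R x" using Qnn[OF x0] by simp
      then show "0 \<le> poly R x" using x0 by (simp add: zero_le_mult_iff)
    qed
    have Rnz: "R \<noteq> 0"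
    proof
      assume "R = 0"
      then have "\<forall>k\<le>n. coeff Q (Suc k) = 0"
        by (metis R_def coeff_0 coeff_poly_of)
      then have "(\<Sum>k\<le>Suc n. \<bar>coeff Q k\<bar>) = 0" using q0
        by (subst sum.atMost_Suc_shift) simp
      then show False using rQ(3) by simp
    qed
    have "0 < riesz n s R"
      using sp0 Rnn Rnz degree_poly_of[of n] unfolding strictly_positive_on_def R_def by blast
    then show False using Rs by simp
  qed
  then obtain j where j: "\<forall>P. degree P \<le> Suc n \<and> (\<forall>x\<in>{A / (real j + 2)..B}. 0 \<le> poly P x) \<and> P \<noteq> 0 \<longrightarrow> 0 < riesz (Suc n) ?s' P"
    by blast
  have a'0: "0 < A / (real j + 2)" using A0 by simp
  have a'A: "A / (real j + 2) < A" using A0 by (simp add: divide_less_eq)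
  have "strictly_positive_on (Suc n) ?s' (A / (real j + 2)) B"
    unfolding strictly_positive_on_def positive_on_def
  proof (intro conjI allI impI)
    fix P :: "real poly"
    assume P: "degree P \<le> Suc n \<and> (\<forall>x\<in>{A / (real j + 2)..B}. 0 \<le> poly P x)"
    show "0 \<le> riesz (Suc n) ?s' P"
    proof (cases "P = 0")
      case True then show ?thesis by simp
    next
      case False then show ?thesis using j P by (simp add: less_imp_le)
    qed
  next
    fix P :: "real poly"
    assume "degree P \<le> Suc n \<and> (\<forall>x\<in>{A / (real j + 2)..B}. 0 \<le> poly P x) \<and> P \<noteq> 0"
    then show "0 < riesz (Suc n) ?s' P" using j by blast
  qed
  then show ?thesis unfolding strictly_positive_pos_reals_def using a'0 a'A AB
    by (intro exI[of _ "A / (real j + 2)"] exI[of _ B]) auto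
qed

theorem theorem5p4:
  fixes n :: nat and s :: "nat \<Rightarrow> real" and sm1 :: real
  assumes "\<forall>k\<le>n. 0 \<le> s k"
    and "strictly_positive_pos_reals n s"
    and "0 \<le> sm1"
  shows "strictly_positive_pos_reals (Suc n) (prepend_seq sm1 s) \<longleftrightarrow>
           t_inf n s < ennreal sm1"
  using fwd bwd assms by blast

end
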